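(* Let $\Gamma$ be a connected vacuum Feynman graph of the multi-orientable (MO) tensor model and let $\Gamma'_2$ be a two-point subgraph of $\Gamma$. Let $\Gamma/\Gamma'_2$ be the vacuum graph obtained from $\Gamma$ by replacing $\Gamma'_2$ with a single line, and let $\Gamma'$ be the vacuum graph obtained from $\Gamma'_2$ by joining its two external half-lines into one line. Then $$\omega(\Gamma)=\omega(\Gamma/\Gamma'_2)+\omega(\Gamma').$$
   Context: The MO tensor model concerns a complex tensor $\phi_{ijk}$, $i,j,k\in\{1,\dots,N\}$, with quadratic action $\sum_{ijk}\overline{\phi}_{ijk}\phi_{ijk}$ and quartic interaction $\lambda\sum \phi_{ijk}\overline{\phi}_{kj'i'}\phi_{k'ji'}\overline{\phi}_{k'j'i}$. Its Feynman graphs are stranded graphs built as follows. Each vertex has four half-lines $h_1,h_2,h_3,h_4$ in cyclic order, carrying $\phi_{ijk},\overline{\phi}_{kj'i'},\phi_{k'ji'},\overline{\phi}_{k'j'i}$ respectively; $h_1,h_3$ are labelled $+$ and $h_2,h_4$ are labelled $-$. Each half-line carries three strands (one per index slot), and inside a vertex two strands are joined when they carry the same index letter: $i$ joins $h_1,h_4$; $k$ joins $h_1,h_2$; $i'$ joins $h_2,h_3$; $k'$ joins $h_3,h_4$; $j$ joins $h_1,h_3$; $j'$ joins $h_2,h_4$. A line joins a $+$ half-line to a $-$ half-line, connecting the strands in the same index slot. A (connected) vacuum graph is a finite connected set of vertices all of whose half-lines are paired by lines; a two-point graph has exactly two unpaired (external) half-lines, one $+$ and one $-$. A two-point subgraph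 of a vacuum graph $\Gamma$ is a subgraph connected to the rest of $\Gamma$ by exactly two lines (which become its external half-lines). A face is a closed cycle formed by strands. Strands joining opposite half-lines ($h_1$–$h_3$ or $h_2$–$h_4$) are inner; the others are outer, and outer strands split into two types (those joining $h_1$–$h_2$ or $h_3$–$h_4$, and those joining $h_1$–$h_4$ or $h_2$–$h_3$); types are preserved along lines, so each face has one of three types. A jacket is the ribbon graph formed by the strands of two of the three types; it has genus $g_J=1-\frac12(F_J-L+V)\in\frac12\mathbb{N}$ (non-orientable jackets allowed), where $F_J$ is its number of faces, and $V,L=2V$ are the numbers of vertices and lines of the graph. The degree of a vacuum graph with $V$ vertices and $F$ faces is $\omega=\sum_J g_J=3+\frac32V-F$. *)

theory Defs
  imports Complex_Main
begin

text \<open>Half-lines of a vertex, in cyclic order h1,h2,h3,h4.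
  h1 carries phi_{ijk}, h2 carries phibar_{kj'i'}, h3 carries phi_{k'ji'},
  h4 carries phibar_{k'j'i}.\<close>
datatype hl = H1 | H2 | H3 | H4

text \<open>Index slots (strand families): the slot of the i-type index (i or i'),
  of the j-type index (j or j') and of the k-type index (k or k').\<close>
datatype slot = SI | SJ | SK

definition plus_hl :: "hl \<Rightarrow> bool" where
  "plus_hl h \<longleftrightarrow> h = H1 \<or> h = H3"

text \<open>Strand joins inside a vertex:
  i: h1-h4, i': h2-h3, j: h1-h3, j': h2-h4, k: h1-h2, k': h3-h4.\<close>
fun vpartner :: "slot \<Rightarrow> hl \<Rightarrow> hl" where
  "vpartner SI H1 = H4" | "vpartner SI H4 = H1" | "vpartner SI H2 = H3" | "vpartner SI H3 = H2"
| "vpartner SJ H1 = H3" | "vpartner SJ H3 = H1" | "vpartner SJ H2 = H4" | "vpartner SJ H4 = H2"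
| "vpartner SK H1 = H2" | "vpartner SK H2 = H1" | "vpartner SK H3 = H4" | "vpartner SK H4 = H3"

text \<open>A graph is given by its vertex set V and the line pairing L on half-lines
  (vertex, hl). Only the values of L on half-lines of V matter.\<close>

definition half_lines :: "'v set \<Rightarrow> ('v \<times> hl) set" where
  "half_lines V = V \<times> UNIV"

definition adj_rel :: "'v set \<Rightarrow> ('v \<times> hl \<Rightarrow> 'v \<times> hl) \<Rightarrow> ('v \<times> 'v) set" where
  "adj_rel V L = {(v, w). v \<in> V \<and> w \<in> V \<and> (\<exists>h h'. L (v, h) = (w, h'))}"

definition connected_graph :: "'v set \<Rightarrow> ('v \<times> hl \<Rightarrow> 'v \<times> hl) \<Rightarrow> bool" where
  "connected_graph V L \<longleftrightarrow> (\<forall>v\<in>V. \<forall>w\<in>V. (v, w) \<in> (adj_rel V L)\<^sup>*)"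

definition line_pairing :: "'v set \<Rightarrow> ('v \<times> hl \<Rightarrow> 'v \<times> hl) \<Rightarrow> bool" where
  "line_pairing V L \<longleftrightarrow>
     (\<forall>x\<in>half_lines V. L x \<in> half_lines V \<and> L x \<noteq> x \<and> L (L x) = x
        \<and> (plus_hl (snd x) \<longleftrightarrow> \<not> plus_hl (snd (L x))))"

definition vacuum_graph :: "'v set \<Rightarrow> ('v \<times> hl \<Rightarrow> 'v \<times> hl) \<Rightarrow> bool" where
  "vacuum_graph V L \<longleftrightarrow> finite V \<and> V \<noteq> {} \<and> line_pairing V L \<and> connected_graph V L"

definition strand_ends :: "'v set \<Rightarrow> ('v \<times> hl \<times> slot) set" where
  "strand_ends V = V \<times> UNIV \<times> UNIV"

definition strand_rel :: "'v set \<Rightarrow> ('v \<times> hl \<Rightarrow> 'v \<times> hl) \<Rightarrow> (('v \<times> hl \<times> slot) \<times> ('v \<times> hl \<times> slot)) set" where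
  "strand_rel V L = {((v, h, s), (w, h', s')). v \<in> V \<and> w \<in> V \<and> s' = s \<and>
      ((w = v \<and> h' = vpartner s h) \<or> L (v, h) = (w, h'))}"

definition faces :: "'v set \<Rightarrow> ('v \<times> hl \<Rightarrow> 'v \<times> hl) \<Rightarrow> ('v \<times> hl \<times> slot) set set" where
  "faces V L = strand_ends V // ((strand_rel V L)\<^sup>*)"

text \<open>Face types: j-strands are inner; k-strands (h1-h2, h3-h4) and i-strands
  (h1-h4, h2-h3) are the two outer types. The jacket omitting type t consists of
  the faces of the other two types.\<close>
definition jacket_faces :: "'v set \<Rightarrow> ('v \<times> hl \<Rightarrow> 'v \<times> hl) \<Rightarrow> slot \<Rightarrow> nat" where
  "jacket_faces V L t = card {f \<in> faces V L. \<exists>x\<in>f. snd (snd x) \<noteq> t}"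

definition jacket_genus :: "'v set \<Rightarrow> ('v \<times> hl \<Rightarrow> 'v \<times> hl) \<Rightarrow> slot \<Rightarrow> real" where
  "jacket_genus V L t = 1 - (real (jacket_faces V L t) - real (2 * card V) + real (card V)) / 2"

definition degree :: "'v set \<Rightarrow> ('v \<times> hl \<Rightarrow> 'v \<times> hl) \<Rightarrow> real" where
  "degree V L = (\<Sum>t\<in>UNIV. jacket_genus V L t)"

definition ext_half_lines :: "'v set \<Rightarrow> ('v \<times> hl \<Rightarrow> 'v \<times> hl) \<Rightarrow> ('v \<times> hl) set" where
  "ext_half_lines S L = {x \<in> half_lines S. fst (L x) \<notin> S}"

definition two_point_subgraph :: "'v set \<Rightarrow> ('v \<times> hl \<Rightarrow> 'v \<times> hl) \<Rightarrow> 'v set \<Rightarrow> bool" where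
  "two_point_subgraph V L S \<longleftrightarrow> S \<subseteq> V \<and> S \<noteq> {} \<and> connected_graph S L \<and>
     card (ext_half_lines S L) = 2 \<and>
     (\<exists>p m. ext_half_lines S L = {p, m} \<and> plus_hl (snd p) \<and> \<not> plus_hl (snd m))"

definition ext_plus :: "'v set \<Rightarrow> ('v \<times> hl \<Rightarrow> 'v \<times> hl) \<Rightarrow> 'v \<times> hl" where
  "ext_plus S L = (THE x. x \<in> ext_half_lines S L \<and> plus_hl (snd x))"

definition ext_minus :: "'v set \<Rightarrow> ('v \<times> hl \<Rightarrow> 'v \<times> hl) \<Rightarrow> 'v \<times> hl" where
  "ext_minus S L = (THE x. x \<in> ext_half_lines S L \<and> \<not> plus_hl (snd x))"

definition close_lines :: "'v set \<Rightarrow> ('v \<times> hl \<Rightarrow> 'v \<times> hl) \<Rightarrow> ('v \<times> hl \<Rightarrow> 'v \<times> hl)" where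
  "close_lines S L = (let p = ext_plus S L; m = ext_minus S L in
     (\<lambda>x. if x = p then m else if x = m then p else L x))"

definition contract_lines :: "'v set \<Rightarrow> ('v \<times> hl \<Rightarrow> 'v \<times> hl) \<Rightarrow> ('v \<times> hl \<Rightarrow> 'v \<times> hl)" where
  "contract_lines S L = (let p' = L (ext_plus S L); m' = L (ext_minus S L) in
     (\<lambda>x. if x = p' then m' else if x = m' then p' else L x))"

end

theory Submission
  imports Defs
begin


lemma UNIV_hl: "(UNIV::hl set) = {H1,H2,H3,H4}" using hl.exhaust by auto
lemma UNIV_slot: "(UNIV::slot set) = {SI,SJ,SK}" using slot.exhaust by auto

lemma slot_rtrancl: "(x,y) \<in> (strand_rel V L)\<^sup>* \<Longrightarrow> snd (snd y) = snd (snd x)"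
  by (induction rule: rtrancl_induct) (auto simp: strand_rel_def)

lemma finite_strand_ends: "finite V \<Longrightarrow> finite (strand_ends V)"
  unfolding strand_ends_def by (simp add: UNIV_hl UNIV_slot)

lemma finite_quot: "finite X \<Longrightarrow> finite (X // r)"
  unfolding quotient_def by auto

lemma degree_formula:
  assumes "finite V"
  shows "degree V L = 3 + 3 * real (card V) / 2 - real (card (faces V L))"
proof -
  define F where "F = faces V L"
  have finF: "finite F" unfolding F_def faces_def
    by (rule finite_quot[OF finite_strand_ends[OF assms]])
  have ind: "(\<Sum>t\<in>UNIV. if (\<exists>x\<in>f. snd(snd x) \<noteq> t) then 1 else 0) = (2::nat)" if fF: "f \<in> F" for f
  proof -
    obtain x where x: "x \<in> strand_ends V" "f = (strand_rel V L)\<^sup>* `` {x}"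
      using fF unfolding F_def faces_def by (metis quotientE)
    have xf: "x \<in> f" using x by auto
    have sl: "\<forall>y\<in>f. snd (snd y) = snd (snd x)"
    proof
      fix y assume "y \<in> f"
      then have "(x,y) \<in> (strand_rel V L)\<^sup>*" using x by simp
      then show "snd (snd y) = snd (snd x)" by (rule slot_rtrancl)
    qed
    have "\<And>t. (\<exists>y\<in>f. snd(snd y) \<noteq> t) \<longleftrightarrow> snd (snd x) \<noteq> t" using sl xf by metis
    then show ?thesis by (cases "snd (snd x)") (simp_all add: UNIV_slot)
  qed
  have J: "jacket_faces V L t = (\<Sum>f\<in>F. if (\<exists>x\<in>f. snd(snd x) \<noteq> t) then 1 else 0)" for t
    unfolding jacket_faces_def F_def[symmetric]
    using sum.inter_filter[OF finF, of "\<lambda>_. (1::nat)"] by simp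
  have "(\<Sum>t\<in>UNIV. jacket_faces V L t) = (\<Sum>f\<in>F. (\<Sum>t\<in>UNIV. if (\<exists>x\<in>f. snd(snd x) \<noteq> t) then 1 else 0))"
    unfolding J by (rule sum.swap)
  also have "\<dots> = (\<Sum>f\<in>F. 2)" using ind by simp
  finally have S: "jacket_faces V L SI + jacket_faces V L SJ + jacket_faces V L SK = 2 * card F"
    by (simp add: UNIV_slot)
  have "degree V L = jacket_genus V L SI + jacket_genus V L SJ + jacket_genus V L SK"
    unfolding degree_def by (simp add: UNIV_slot)
  also have "\<dots> = 3 + 3 * real (card V) / 2 - real (card F)"
  proof -
    have "real (jacket_faces V L SI) + real (jacket_faces V L SJ) + real (jacket_faces V L SK) = 2 * real (card F)"
      using S by (metis of_nat_add of_nat_mult of_nat_numeral)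
    then show ?thesis unfolding jacket_genus_def by (simp add: field_simps)
  qed
  finally show ?thesis unfolding F_def .
qed

lemma inv_even:
  "finite C \<Longrightarrow> \<forall>x\<in>C. f x \<in> C \<and> f x \<noteq> x \<and> f (f x) = x \<Longrightarrow> even (card C)"
proof (induction "card C" arbitrary: C rule: less_induct)
  case less
  show ?case
  proof (cases "C = {}")
    case True then show ?thesis by simp
  next
    case False
    then obtain x where x: "x \<in> C" by auto
    define C' where "C' = C - {x, f x}"
    have h: "\<forall>y\<in>C'. f y \<in> C' \<and> f y \<noteq> y \<and> f (f y) = y"
    proof
      fix y assume y: "y \<in> C'"
      have yC: "y \<in> C" "y \<noteq> x" "y \<noteq> f x" using y unfolding C'_def by auto
      have fy: "f y \<in> C" "f y \<noteq> y" "f (f y) = y" using less.prems(2) yC(1) by auto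
      have fx: "f (f x) = x" using less.prems(2) x by auto
      have "f y \<noteq> x" using fy(3) yC(3) by auto
      moreover have "f y \<noteq> f x" using fy(3) fx yC(2) by metis
      ultimately show "f y \<in> C' \<and> f y \<noteq> y \<and> f (f y) = y" using fy unfolding C'_def by auto
    qed
    have fxx: "f x \<noteq> x" "f x \<in> C" using less.prems(2) x by auto
    have c2: "card {x, f x} = 2" using fxx by simp
    have "card C' = card C - card {x, f x}" unfolding C'_def
      using less.prems(1) x fxx by (intro card_Diff_subset) auto
    moreover have "card {x, f x} \<le> card C" using less.prems(1) x fxx by (intro card_mono) auto
    ultimately have c: "card C = card C' + 2" using c2 by simp
    have "even (card C')" using less.hyps[of C'] h less.prems c unfolding C'_def by simp
    then show ?thesis using c by simp
  qed
qed


lemma rtrancl_in: "(x,y) \<in> R\<^sup>* \<Longrightarrow> R \<subseteq> X \<times> X \<Longrightarrow> x \<in> X \<Longrightarrow> y \<in> X"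
  by (induction rule: rtrancl_induct) auto

lemma vpartner_inv: "vpartner s (vpartner s h) = h"
  by (cases s; cases h) auto
lemma vpartner_neq: "vpartner s h \<noteq> h"
  by (cases s; cases h) auto

lemma parity_conn:
  assumes fin: "finite T"
    and inv: "\<forall>x\<in>half_lines T. L (L x) = x \<and> L x \<noteq> x"
    and ext: "\<forall>x\<in>half_lines T. fst (L x) \<notin> T \<longleftrightarrow> x = a \<or> x = b"
    and a: "a \<in> half_lines T"
  shows "((fst a, snd a, s), (fst b, snd b, s)) \<in> (strand_rel T L)\<^sup>*"
proof (rule ccontr)
  assume nb: "((fst a, snd a, s), (fst b, snd b, s)) \<notin> (strand_rel T L)\<^sup>*"
  define as where "as = (fst a, snd a, s)"
  define bs where "bs = (fst b, snd b, s)"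
  define C where "C = (strand_rel T L)\<^sup>* `` {as}"
  have Rsub: "strand_rel T L \<subseteq> strand_ends T \<times> strand_ends T"
    unfolding strand_rel_def strand_ends_def by auto
  have asE: "as \<in> strand_ends T" using a unfolding as_def strand_ends_def half_lines_def by auto
  have CE: "C \<subseteq> strand_ends T" unfolding C_def using rtrancl_in[OF _ Rsub asE] by auto
  have finC: "finite C" using CE finite_strand_ends[OF fin] finite_subset by auto
  have slC: "\<forall>y\<in>C. snd (snd y) = s" unfolding C_def as_def using slot_rtrancl by fastforce
  have asC: "as \<in> C" unfolding C_def by auto
  have bC: "bs \<notin> C" using nb unfolding C_def as_def bs_def by auto
  define sg where "sg = (\<lambda>(v::'a,h,t). (v, vpartner t h, t))"
  have "\<forall>y\<in>C. sg y \<in> C \<and> sg y \<noteq> y \<and> sg (sg y) = y"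
  proof
    fix y assume y: "y \<in> C"
    obtain v h t where yy: "y = (v,h,t)" by (cases y) auto
    have "v \<in> T" using y CE yy unfolding strand_ends_def by auto
    then have "(y, sg y) \<in> strand_rel T L" unfolding yy sg_def strand_rel_def by auto
    then have "sg y \<in> C" using y unfolding C_def by (meson Image_singleton_iff rtrancl.rtrancl_into_rtrancl)
    then show "sg y \<in> C \<and> sg y \<noteq> y \<and> sg (sg y) = y"
      unfolding yy sg_def by (simp add: vpartner_inv vpartner_neq)
  qed
  then have ev1: "even (card C)" using inv_even finC by blast
  define D where "D = C - {as}"
  define tau where "tau = (\<lambda>(v::'a,h::hl,t::slot). (fst (L (v,h)), snd (L (v,h)), t))"
  have "\<forall>y\<in>D. tau y \<in> D \<and> tau y \<noteq> y \<and> tau (tau y) = y"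
  proof
    fix y assume y: "y \<in> D"
    obtain v h t where yy: "y = (v,h,t)" by (cases y) auto
    have vT: "v \<in> T" and tt: "t = s" using y CE yy slC unfolding D_def strand_ends_def by auto
    have vh: "(v,h) \<in> half_lines T" using vT unfolding half_lines_def by auto
    have na: "(v,h) \<noteq> a" using y yy tt unfolding D_def as_def by auto
    have nb': "(v,h) \<noteq> b" using y yy tt bC unfolding D_def bs_def by auto
    have LT: "fst (L (v,h)) \<in> T" using ext vh na nb' by auto
    have Lh: "L (v,h) \<in> half_lines T" using LT unfolding half_lines_def by (cases "L (v,h)") auto
    have "(y, tau y) \<in> strand_rel T L" unfolding yy tau_def strand_rel_def using vT LT by auto
    then have tC: "tau y \<in> C" using y unfolding C_def D_def by (meson DiffD1 Image_singleton_iff rtrancl.rtrancl_into_rtrancl)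
    have "L (v,h) \<noteq> a"
    proof
      assume "L (v,h) = a"
      then have "L a = (v,h)" using inv vh by auto
      then show False using ext a vT by auto
    qed
    then have "tau y \<noteq> as" unfolding yy tau_def as_def by (auto simp: prod_eq_iff)
    then have "tau y \<in> D" using tC unfolding D_def by auto
    moreover have "tau y \<noteq> y" using inv vh unfolding yy tau_def by (auto simp: prod_eq_iff)
    moreover have "tau (tau y) = y" using inv vh unfolding yy tau_def by auto
    ultimately show "tau y \<in> D \<and> tau y \<noteq> y \<and> tau (tau y) = y" by blast
  qed
  then have ev2: "even (card D)" using inv_even finC unfolding D_def by blast
  have "card D = card C - 1" unfolding D_def using asC finC by simp
  moreover have "card C \<ge> 1" using asC finC card_0_eq by fastforce
  ultimately show False using ev1 ev2 by presburger
qed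



lemma quot_add_edge:
  assumes fin: "finite X" and sy: "sym R" and sub: "R \<subseteq> X \<times> X"
    and aX: "a \<in> X" and bX: "b \<in> X" and nab: "(a,b) \<notin> R\<^sup>*"
  shows "card (X // (R \<union> {(a,b),(b,a)})\<^sup>*) + 1 = card (X // R\<^sup>*)"
proof -
  define r where "r = R\<^sup>*"
  define R' where "R' = R \<union> {(a,b),(b,a)}"
  have symr: "sym r" unfolding r_def using sy by (rule sym_rtrancl)
  have trr: "trans r" unfolding r_def by (rule trans_rtrancl)
  have rs: "(y,x) \<in> r" if "(x,y) \<in> r" for x y using symr that by (meson symD)
  have rt: "(x,z) \<in> r" if "(x,y) \<in> r" "(y,z) \<in> r" for x y z using trr that by (meson transD)
  have char: "(x,y) \<in> R'\<^sup>* \<longleftrightarrow> (x,y) \<in> r \<or> ((x,a) \<in> r \<and> (b,y) \<in> r) \<or> ((x,b) \<in> r \<and> (a,y) \<in> r)" for x y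
  proof
    assume "(x,y) \<in> R'\<^sup>*"
    then show "(x,y) \<in> r \<or> ((x,a) \<in> r \<and> (b,y) \<in> r) \<or> ((x,b) \<in> r \<and> (a,y) \<in> r)"
    proof (induction rule: rtrancl_induct)
      case base then show ?case unfolding r_def by simp
    next
      case (step y z)
      show ?case
      proof (cases "(y,z) \<in> R")
        case True
        then have yz: "(y,z) \<in> r" unfolding r_def by simp
        then show ?thesis using step.IH rt by blast
      next
        case False
        then have "(y,z) = (a,b) \<or> (y,z) = (b,a)" using step.hyps(2) unfolding R'_def by auto
        moreover have "(a,a) \<in> r" "(b,b) \<in> r" unfolding r_def by auto
        ultimately show ?thesis using step.IH rt by blast
      qed
    qed
  next
    have Rr: "r \<subseteq> R'\<^sup>*" unfolding r_def R'_def by (rule rtrancl_mono) auto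
    have ab: "(a,b) \<in> R'\<^sup>*" "(b,a) \<in> R'\<^sup>*" unfolding R'_def by auto
    assume "(x,y) \<in> r \<or> ((x,a) \<in> r \<and> (b,y) \<in> r) \<or> ((x,b) \<in> r \<and> (a,y) \<in> r)"
    then show "(x,y) \<in> R'\<^sup>*" using Rr ab by (meson rtrancl_trans subsetD)
  qed
  define cl where "cl = (\<lambda>x. r `` {x})"
  have clx: "x \<in> cl x" for x unfolding cl_def r_def by simp
  have cl_eq: "cl x = cl y" if "(x,y) \<in> r" for x y
    unfolding cl_def using that rs rt by blast
  have inab: "(a,x) \<in> r \<longleftrightarrow> (x,a) \<in> r" "(b,x) \<in> r \<longleftrightarrow> (x,b) \<in> r" for x using rs by blast+
  have nab': "(a,b) \<notin> r" using nab unfolding r_def .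
  have bna: "(b,a) \<notin> r" using nab' rs by blast
  have newcl: "R'\<^sup>* `` {x} = (if x \<in> cl a \<union> cl b then cl a \<union> cl b else cl x)" for x
  proof (cases "x \<in> cl a")
    case True
    then have xa: "(x,a) \<in> r" unfolding cl_def using rs by blast
    have xb: "(x,b) \<notin> r" using rt[OF rs[OF xa]] nab' by blast
    have e: "(x,y) \<in> r \<longleftrightarrow> (a,y) \<in> r" for y using rt[OF rs[OF xa]] rt[OF xa] by blast
    have "R'\<^sup>* `` {x} = cl a \<union> cl b"
    proof (rule set_eqI)
      fix y show "y \<in> R'\<^sup>* `` {x} \<longleftrightarrow> y \<in> cl a \<union> cl b"
        unfolding Image_singleton_iff char cl_def using e[of y] xa xb by blast
    qed
    then show ?thesis using True by simp
  next
    case F1: False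
    show ?thesis
    proof (cases "x \<in> cl b")
      case True
      then have xb: "(x,b) \<in> r" unfolding cl_def using rs by blast
      have xa: "(x,a) \<notin> r" using rt[OF rs[OF xb]] bna by blast
      have e: "(x,y) \<in> r \<longleftrightarrow> (b,y) \<in> r" for y using rt[OF rs[OF xb]] rt[OF xb] by blast
      have "R'\<^sup>* `` {x} = cl a \<union> cl b"
      proof (rule set_eqI)
        fix y show "y \<in> R'\<^sup>* `` {x} \<longleftrightarrow> y \<in> cl a \<union> cl b"
          unfolding Image_singleton_iff char cl_def using e[of y] xa xb by blast
      qed
      then show ?thesis using True by simp
    next
      case False
      then have "(x,a) \<notin> r" "(x,b) \<notin> r" using F1 rs unfolding cl_def by auto
      then have "R'\<^sup>* `` {x} = cl x" unfolding cl_def by (auto simp: char)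
      then show ?thesis using F1 False by simp
    qed
  qed
  define Q where "Q = X // r"
  have Qcl: "Q = cl ` X" unfolding Q_def quotient_def cl_def by auto
  have Q'cl: "X // R'\<^sup>* = (\<lambda>x. R'\<^sup>* `` {x}) ` X" unfolding quotient_def by auto
  have Qeq: "X // R'\<^sup>* = insert (cl a \<union> cl b) (Q - {cl a, cl b})"
  proof
    show "X // R'\<^sup>* \<subseteq> insert (cl a \<union> cl b) (Q - {cl a, cl b})"
    proof
      fix c assume "c \<in> X // R'\<^sup>*"
      then obtain x where x: "x \<in> X" "c = R'\<^sup>* `` {x}" unfolding Q'cl by auto
      show "c \<in> insert (cl a \<union> cl b) (Q - {cl a, cl b})"
      proof (cases "x \<in> cl a \<union> cl b")
        case True then show ?thesis using x newcl by simp
      next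
        case False
        then have "cl x \<noteq> cl a" "cl x \<noteq> cl b" using clx by auto
        then show ?thesis using x newcl False Qcl by auto
      qed
    qed
  next
    show "insert (cl a \<union> cl b) (Q - {cl a, cl b}) \<subseteq> X // R'\<^sup>*"
    proof
      fix c assume c: "c \<in> insert (cl a \<union> cl b) (Q - {cl a, cl b})"
      show "c \<in> X // R'\<^sup>*"
      proof (cases "c = cl a \<union> cl b")
        case True
        then have "c = R'\<^sup>* `` {a}" using newcl[of a] clx by simp
        then show ?thesis unfolding Q'cl using aX by auto
      next
        case False
        then obtain x where x: "x \<in> X" "c = cl x" "cl x \<noteq> cl a" "cl x \<noteq> cl b" using c Qcl by auto
        have "x \<notin> cl a" using x(3) cl_eq rs unfolding cl_def by blast
        moreover have "x \<notin> cl b" using x(4) cl_eq rs unfolding cl_def by blast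
        ultimately have "c = R'\<^sup>* `` {x}" using newcl[of x] x by simp
        then show ?thesis unfolding Q'cl using x by auto
      qed
    qed
  qed
  have finQ: "finite Q" unfolding Qcl using fin by simp
  have aQ: "cl a \<in> Q" "cl b \<in> Q" unfolding Qcl using aX bX by auto
  have dab: "cl a \<noteq> cl b" using clx[of b] bna unfolding cl_def using rs by blast
  have nin: "cl a \<union> cl b \<notin> Q - {cl a, cl b}"
  proof
    assume "cl a \<union> cl b \<in> Q - {cl a, cl b}"
    then obtain x where x: "cl x = cl a \<union> cl b" "x \<in> X" unfolding Qcl by auto
    have "a \<in> cl x" using x clx by auto
    then have "cl x = cl a" using cl_eq rs unfolding cl_def by blast
    then have "b \<in> cl a" using x clx by auto
    then show False using bna rs unfolding cl_def by blast
  qed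
  have "card (X // R'\<^sup>*) = card (Q - {cl a, cl b}) + 1" unfolding Qeq using finQ nin by simp
  moreover have c2: "card {cl a, cl b} = 2" using dab by simp
  moreover have "card (Q - {cl a, cl b}) = card Q - card {cl a, cl b}"
    using finQ aQ by (intro card_Diff_subset) auto
  moreover have "card {cl a, cl b} \<le> card Q" using finQ aQ by (intro card_mono) auto
  ultimately have "card (X // R'\<^sup>*) + 1 = card Q" by linarith
  then show ?thesis unfolding Q_def r_def R'_def .
qed

lemma quot_disj_union:
  assumes "A \<inter> B = {}" "RA \<subseteq> A \<times> A" "RB \<subseteq> B \<times> B" "finite A" "finite B"
  shows "card ((A \<union> B) // (RA \<union> RB)\<^sup>*) = card (A // RA\<^sup>*) + card (B // RB\<^sup>*)"
proof -
  have inX: "y \<in> X" if "(x,y) \<in> R\<^sup>*" "R \<subseteq> X \<times> X" "x \<in> X" for x y R X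
    using that by (induction rule: rtrancl_induct) auto
  have ra: "(x,y) \<in> RA\<^sup>*" if "(x,y) \<in> (RA \<union> RB)\<^sup>*" "x \<in> A" for x y
    using that
  proof (induction rule: rtrancl_induct)
    case base then show ?case by simp
  next
    case (step y z)
    have "y \<in> A" using inX[of x y RA A] step assms(2) by auto
    then have "(y,z) \<in> RA" using step.hyps(2) assms(1,3) by auto
    then show ?case using step by auto
  qed
  have rb: "(x,y) \<in> RB\<^sup>*" if "(x,y) \<in> (RA \<union> RB)\<^sup>*" "x \<in> B" for x y
    using that
  proof (induction rule: rtrancl_induct)
    case base then show ?case by simp
  next
    case (step y z)
    have "y \<in> B" using inX[of x y RB B] step assms(3) by auto
    then have "(y,z) \<in> RB" using step.hyps(2) assms(1,2) by auto
    then show ?case using step by auto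
  qed
  have ea: "(RA \<union> RB)\<^sup>* `` {x} = RA\<^sup>* `` {x}" if "x \<in> A" for x
    using ra[OF _ that] rtrancl_mono[of RA "RA \<union> RB"] by auto
  have eb: "(RA \<union> RB)\<^sup>* `` {x} = RB\<^sup>* `` {x}" if "x \<in> B" for x
    using rb[OF _ that] rtrancl_mono[of RB "RA \<union> RB"] by auto
  have eq: "(A \<union> B) // (RA \<union> RB)\<^sup>* = A // RA\<^sup>* \<union> B // RB\<^sup>*"
    unfolding quotient_def using ea eb by auto
  have d: "A // RA\<^sup>* \<inter> B // RB\<^sup>* = {}"
  proof (rule ccontr)
    assume "A // RA\<^sup>* \<inter> B // RB\<^sup>* \<noteq> {}"
    then obtain x y where "x \<in> A" "y \<in> B" "RA\<^sup>* `` {x} = RB\<^sup>* `` {y}" unfolding quotient_def by auto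
    then have "x \<in> RB\<^sup>* `` {y}" by auto
    then have "x \<in> B" using inX[of y x RB B] assms(3) \<open>y \<in> B\<close> by auto
    then show False using \<open>x \<in> A\<close> assms(1) by auto
  qed
  have fA: "finite (A // RA\<^sup>*)" "finite (B // RB\<^sup>*)" unfolding quotient_def using assms(4,5) by auto
  show ?thesis unfolding eq using card_Un_disjoint[OF fA d] .
qed



lemma strand_rel_sym:
  assumes "\<forall>x\<in>half_lines T. L (L x) = x"
  shows "sym (strand_rel T L)"
proof (rule symI)
  fix x y assume "(x,y) \<in> strand_rel T L"
  then obtain v h s w h' where xy: "x = (v,h,s)" "y = (w,h',s)" "v \<in> T" "w \<in> T"
    "(w = v \<and> h' = vpartner s h) \<or> L (v,h) = (w,h')"
    unfolding strand_rel_def by auto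
  have "L (w,h') = (v,h)" if "L (v,h) = (w,h')"
    using that assms xy(3) unfolding half_lines_def by (metis SigmaI UNIV_I)
  then have "(h = vpartner s h' \<and> v = w) \<or> L (w,h') = (v,h)" using xy(5) vpartner_inv by metis
  then show "(y,x) \<in> strand_rel T L" unfolding strand_rel_def xy using xy(3,4) by auto
qed

lemma rtrancl_inv: "(x,y) \<in> R\<^sup>* \<Longrightarrow> R \<subseteq> Q \<Longrightarrow> (\<forall>z. (z,z) \<in> Q) \<Longrightarrow> trans Q \<Longrightarrow> (x,y) \<in> Q"
  by (induction rule: rtrancl_induct) (auto dest: transD)

lemma sym_add: "sym R \<Longrightarrow> sym (R \<union> {(a,b),(b,a)})"
  unfolding sym_def by auto

theorem mainTheorem1:
  fixes V S :: "'v set" and L :: "'v \<times> hl \<Rightarrow> 'v \<times> hl"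
  assumes "vacuum_graph V L"
    and "two_point_subgraph V L S"
  shows "degree V L = degree (V - S) (contract_lines S L) + degree S (close_lines S L)"
proof -
  have finV: "finite V" and lp: "line_pairing V L" using assms(1) unfolding vacuum_graph_def by auto
  obtain p m where SV: "S \<subseteq> V" and ext: "ext_half_lines S L = {p, m}"
    and pp: "plus_hl (snd p)" and mm: "\<not> plus_hl (snd m)"
    using assms(2) unfolding two_point_subgraph_def by blast
  have finS: "finite S" using finV SV finite_subset by auto
  have finB: "finite (V - S)" using finV by auto
  have pm: "p \<noteq> m" using pp mm by auto
  have ep: "ext_plus S L = p" unfolding ext_plus_def ext apply (rule the_equality) using pp mm by auto
  have em: "ext_minus S L = m" unfolding ext_minus_def ext apply (rule the_equality) using pp mm by auto
  define L2 where "L2 = close_lines S L"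
  define L1 where "L1 = contract_lines S L"
  have L2d: "L2 = (\<lambda>x. if x = p then m else if x = m then p else L x)"
    unfolding L2_def close_lines_def Let_def ep em ..
  have L1d: "L1 = (\<lambda>x. if x = L p then L m else if x = L m then L p else L x)"
    unfolding L1_def contract_lines_def Let_def ep em ..
  have hlV: "x \<in> half_lines V \<longleftrightarrow> fst x \<in> V" for x and V :: "'v set"
    unfolding half_lines_def by (cases x) auto
  have invV: "\<forall>x\<in>half_lines V. L x \<in> half_lines V \<and> L x \<noteq> x \<and> L (L x) = x"
    using lp unfolding line_pairing_def by auto
  have extS: "\<forall>x\<in>half_lines S. fst (L x) \<notin> S \<longleftrightarrow> x = p \<or> x = m"
    using ext unfolding ext_half_lines_def by blast
  have pS: "p \<in> half_lines S" "m \<in> half_lines S" using ext unfolding ext_half_lines_def by auto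
  have pV: "p \<in> half_lines V" "m \<in> half_lines V" using pS SV hlV by auto
  have LpS: "fst (L p) \<notin> S" "fst (L m) \<notin> S" using ext unfolding ext_half_lines_def by auto
  have LLp: "L (L p) = p" "L (L m) = m" using invV pV by auto
  have LpV: "fst (L p) \<in> V" "fst (L m) \<in> V" using invV pV hlV by auto
  have invS: "\<forall>x\<in>half_lines S. L (L x) = x \<and> L x \<noteq> x" using invV SV hlV by auto
  have invB: "\<forall>x\<in>half_lines (V-S). L (L x) = x \<and> L x \<noteq> x" using invV hlV by auto
  have extB: "\<forall>x\<in>half_lines (V-S). fst (L x) \<notin> V - S \<longleftrightarrow> x = L p \<or> x = L m"
  proof
    fix x assume x: "x \<in> half_lines (V-S)"
    then have xV: "x \<in> half_lines V" and xS: "fst x \<notin> S" using hlV by auto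
    have LxV: "fst (L x) \<in> V" using invV xV hlV by auto
    show "fst (L x) \<notin> V - S \<longleftrightarrow> x = L p \<or> x = L m"
    proof
      assume "fst (L x) \<notin> V - S"
      then have "L x \<in> half_lines S" using LxV hlV by auto
      moreover have "fst (L (L x)) \<notin> S" using invV xV xS by auto
      ultimately have "L x = p \<or> L x = m" using extS by auto
      then show "x = L p \<or> x = L m" using invV xV by auto
    next
      assume "x = L p \<or> x = L m"
      then show "fst (L x) \<notin> V - S" using LLp pS hlV by auto
    qed
  qed
  have LpB: "L p \<in> half_lines (V-S)" using LpV LpS hlV by auto
  have LmB: "L m \<in> half_lines (V-S)" using LpV LpS hlV by auto
  define RA where "RA = strand_rel S L"
  define RB where "RB = strand_rel (V - S) L"
  define R where "R = strand_rel V L"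
  define pt where "pt = (\<lambda>s::slot. (fst p, snd p, s))"
  define mt where "mt = (\<lambda>s::slot. (fst m, snd m, s))"
  define qt where "qt = (\<lambda>s::slot. (fst (L p), snd (L p), s))"
  define nt where "nt = (\<lambda>s::slot. (fst (L m), snd (L m), s))"
  have PA: "(pt s, mt s) \<in> RA\<^sup>*" for s
    unfolding pt_def mt_def RA_def by (rule parity_conn[OF finS invS extS pS(1)])
  have PA': "(mt s, pt s) \<in> RA\<^sup>*" for s
    unfolding pt_def mt_def RA_def using extS by (intro parity_conn[OF finS invS _ pS(2)]) blast
  have PB: "(qt s, nt s) \<in> RB\<^sup>*" for s
    unfolding qt_def nt_def RB_def by (rule parity_conn[OF finB invB extB LpB])
  have PB': "(nt s, qt s) \<in> RB\<^sup>*" for s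
    unfolding qt_def nt_def RB_def using extB by (intro parity_conn[OF finB invB _ LmB]) blast
  have RA_R2: "RA \<subseteq> strand_rel S L2"
  proof (rule subrelI)
    fix x y assume "(x,y) \<in> RA"
    then obtain v h s w h' where xy: "x = (v,h,s)" "y = (w,h',s)" "v \<in> S" "w \<in> S"
      "(w = v \<and> h' = vpartner s h) \<or> L (v,h) = (w,h')"
      unfolding RA_def strand_rel_def by auto
    have "L (v,h) = (w,h') \<Longrightarrow> (v,h) \<noteq> p \<and> (v,h) \<noteq> m" using LpS xy(4) by auto
    then have "(w = v \<and> h' = vpartner s h) \<or> L2 (v,h) = (w,h')" using xy(5) unfolding L2d by auto
    then show "(x,y) \<in> strand_rel S L2" unfolding strand_rel_def xy using xy(3,4) by auto
  qed
  have R2_RA: "strand_rel S L2 \<subseteq> RA\<^sup>*"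
  proof (rule subrelI)
    fix x y assume "(x,y) \<in> strand_rel S L2"
    then obtain v h s w h' where xy: "x = (v,h,s)" "y = (w,h',s)" "v \<in> S" "w \<in> S"
      "(w = v \<and> h' = vpartner s h) \<or> L2 (v,h) = (w,h')"
      unfolding strand_rel_def by auto
    show "(x,y) \<in> RA\<^sup>*"
    proof (cases "(v,h) = p \<or> (v,h) = m")
      case True
      then show ?thesis
      proof
        assume vp: "(v,h) = p"
        show ?thesis
        proof (cases "w = v \<and> h' = vpartner s h")
          case True
          then have "(x,y) \<in> RA" unfolding RA_def strand_rel_def xy using xy(3) by auto
          then show ?thesis by auto
        next
          case False
          then have "(w,h') = m" using xy(5) vp unfolding L2d by auto
          then show ?thesis using PA[of s] vp unfolding xy pt_def mt_def by auto
        qed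
      next
        assume vm: "(v,h) = m"
        show ?thesis
        proof (cases "w = v \<and> h' = vpartner s h")
          case True
          then have "(x,y) \<in> RA" unfolding RA_def strand_rel_def xy using xy(3) by auto
          then show ?thesis by auto
        next
          case False
          then have "(w,h') = p" using xy(5) vm pm unfolding L2d by auto
          then show ?thesis using PA'[of s] vm unfolding xy pt_def mt_def by auto
        qed
      qed
    next
      case False
      then have "(w = v \<and> h' = vpartner s h) \<or> L (v,h) = (w,h')" using xy(5) unfolding L2d by auto
      then have "(x,y) \<in> RA" unfolding RA_def strand_rel_def xy using xy(3,4) by auto
      then show ?thesis by auto
    qed
  qed
  have F2: "faces S L2 = strand_ends S // RA\<^sup>*"
    unfolding faces_def using rtrancl_subset[OF RA_R2 R2_RA] by simp
  have RB_R1: "RB \<subseteq> strand_rel (V-S) L1"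
  proof (rule subrelI)
    fix x y assume "(x,y) \<in> RB"
    then obtain v h s w h' where xy: "x = (v,h,s)" "y = (w,h',s)" "v \<in> V-S" "w \<in> V-S"
      "(w = v \<and> h' = vpartner s h) \<or> L (v,h) = (w,h')"
      unfolding RB_def strand_rel_def by auto
    have "L (v,h) = (w,h') \<Longrightarrow> (v,h) \<noteq> L p \<and> (v,h) \<noteq> L m" using LLp pS hlV xy(4) by auto
    then have "(w = v \<and> h' = vpartner s h) \<or> L1 (v,h) = (w,h')" using xy(5) unfolding L1d by auto
    then show "(x,y) \<in> strand_rel (V-S) L1" unfolding strand_rel_def xy using xy(3,4) by auto
  qed
  have LpLm: "L p \<noteq> L m" using LLp pm by metis
  have R1_RB: "strand_rel (V-S) L1 \<subseteq> RB\<^sup>*"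
  proof (rule subrelI)
    fix x y assume "(x,y) \<in> strand_rel (V-S) L1"
    then obtain v h s w h' where xy: "x = (v,h,s)" "y = (w,h',s)" "v \<in> V-S" "w \<in> V-S"
      "(w = v \<and> h' = vpartner s h) \<or> L1 (v,h) = (w,h')"
      unfolding strand_rel_def by auto
    show "(x,y) \<in> RB\<^sup>*"
    proof (cases "(v,h) = L p \<or> (v,h) = L m")
      case True
      then show ?thesis
      proof
        assume vp: "(v,h) = L p"
        show ?thesis
        proof (cases "w = v \<and> h' = vpartner s h")
          case True
          then have "(x,y) \<in> RB" unfolding RB_def strand_rel_def xy using xy(3) by auto
          then show ?thesis by auto
        next
          case False
          then have "(w,h') = L m" using xy(5) vp unfolding L1d by auto
          then have "w = fst (L m)" "h' = snd (L m)" "v = fst (L p)" "h = snd (L p)" using vp by (metis fst_conv snd_conv)+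
          then show ?thesis using PB[of s] unfolding xy qt_def nt_def by simp
        qed
      next
        assume vm: "(v,h) = L m"
        show ?thesis
        proof (cases "w = v \<and> h' = vpartner s h")
          case True
          then have "(x,y) \<in> RB" unfolding RB_def strand_rel_def xy using xy(3) by auto
          then show ?thesis by auto
        next
          case False
          then have "(w,h') = L p" using xy(5) vm LpLm unfolding L1d by auto
          then have "w = fst (L p)" "h' = snd (L p)" "v = fst (L m)" "h = snd (L m)" using vm by (metis fst_conv snd_conv)+
          then show ?thesis using PB'[of s] unfolding xy qt_def nt_def by simp
        qed
      qed
    next
      case False
      then have "(w = v \<and> h' = vpartner s h) \<or> L (v,h) = (w,h')" using xy(5) unfolding L1d by auto
      then have "(x,y) \<in> RB" unfolding RB_def strand_rel_def xy using xy(3,4) by auto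
      then show ?thesis by auto
    qed
  qed
  have F1: "faces (V-S) L1 = strand_ends (V-S) // RB\<^sup>*"
    unfolding faces_def using rtrancl_subset[OF RB_R1 R1_RB] by simp
  define e where "e = (\<lambda>s. {(pt s, qt s), (qt s, pt s)})"
  have e_eq: "e s = {(pt s, qt s), (qt s, pt s)}" for s unfolding e_def ..
  define R3 where "R3 = RA \<union> RB \<union> e SI \<union> e SJ \<union> e SK"
  have eR: "(pt s, qt s) \<in> R3" "(qt s, pt s) \<in> R3" for s
    unfolding R3_def e_def by (cases s; simp)+
  have RA3: "RA\<^sup>* \<subseteq> R3\<^sup>*" "RB\<^sup>* \<subseteq> R3\<^sup>*" unfolding R3_def by (rule rtrancl_mono; auto)+
  have R3_R: "R3 \<subseteq> R"
  proof -
    have "RA \<subseteq> R" "RB \<subseteq> R" using SV unfolding RA_def RB_def R_def strand_rel_def by auto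
    moreover have "e s \<subseteq> R" for s unfolding e_def R_def strand_rel_def pt_def qt_def
      using pS pV LpV LLp hlV SV by auto
    ultimately show ?thesis unfolding R3_def by auto
  qed
  have R_R3: "R \<subseteq> R3\<^sup>*"
  proof (rule subrelI)
    fix x y assume "(x,y) \<in> R"
    then obtain v h s w h' where xy: "x = (v,h,s)" "y = (w,h',s)" "v \<in> V" "w \<in> V"
      "(w = v \<and> h' = vpartner s h) \<or> L (v,h) = (w,h')"
      unfolding R_def strand_rel_def by auto
    show "(x,y) \<in> R3\<^sup>*"
    proof (cases "v \<in> S \<longleftrightarrow> w \<in> S")
      case True
      then have "(x,y) \<in> RA \<or> (x,y) \<in> RB" unfolding RA_def RB_def strand_rel_def xy using xy(3,4,5) by auto
      then show ?thesis unfolding R3_def by auto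
    next
      case False
      then have Lvh: "L (v,h) = (w,h')" using xy(5) by auto
      show ?thesis
      proof (cases "v \<in> S")
        case True
        then have "w \<notin> S" using False by auto
        then have "(v,h) = p \<or> (v,h) = m" using extS True Lvh hlV by (metis fst_conv)
        then show ?thesis
        proof
          assume vp: "(v,h) = p"
          then have "x = pt s" "y = qt s" unfolding xy pt_def qt_def using Lvh by auto
          then show ?thesis using eR by auto
        next
          assume vm: "(v,h) = m"
          then have "x = mt s" "y = nt s" unfolding xy mt_def nt_def using Lvh by auto
          moreover have "(mt s, pt s) \<in> R3\<^sup>*" "(qt s, nt s) \<in> R3\<^sup>*" using PA' PB RA3 by auto
          moreover have "(pt s, qt s) \<in> R3\<^sup>*" using eR by auto
          ultimately show ?thesis by (meson rtrancl_trans)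
        qed
      next
        case vS: False
        then have wS: "w \<in> S" using False by auto
        have "(v,h) \<in> half_lines V" using xy(3) hlV by auto
        then have Lwh: "L (w,h') = (v,h)" using invV Lvh by metis
        have "(w,h') = p \<or> (w,h') = m" using extS wS vS Lwh hlV by (metis fst_conv)
        then show ?thesis
        proof
          assume wp: "(w,h') = p"
          then have "x = qt s" "y = pt s" unfolding xy pt_def qt_def using Lwh by auto
          then show ?thesis using eR by auto
        next
          assume wm: "(w,h') = m"
          then have "x = nt s" "y = mt s" unfolding xy mt_def nt_def using Lwh by auto
          moreover have "(nt s, qt s) \<in> R3\<^sup>*" "(pt s, mt s) \<in> R3\<^sup>*" using PA PB' RA3 by auto
          moreover have "(qt s, pt s) \<in> R3\<^sup>*" using eR by auto
          ultimately show ?thesis by (meson rtrancl_trans)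
        qed
      qed
    qed
  qed
  have FV: "faces V L = strand_ends V // R3\<^sup>*"
    unfolding faces_def R_def[symmetric] using rtrancl_subset[OF R3_R R_R3] by simp
  define X where "X = strand_ends V"
  have XAB: "X = strand_ends S \<union> strand_ends (V-S)" unfolding X_def strand_ends_def using SV by auto
  have finX: "finite X" unfolding X_def using finite_strand_ends[OF finV] .
  have dAB: "strand_ends S \<inter> strand_ends (V-S) = {}" unfolding strand_ends_def by auto
  have subA: "RA \<subseteq> strand_ends S \<times> strand_ends S" unfolding RA_def strand_rel_def strand_ends_def by auto
  have subB: "RB \<subseteq> strand_ends (V-S) \<times> strand_ends (V-S)" unfolding RB_def strand_rel_def strand_ends_def by auto
  have c0: "card (X // (RA \<union> RB)\<^sup>*) = card (faces S L2) + card (faces (V-S) L1)"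
    unfolding F1 F2 XAB by (rule quot_disj_union[OF dAB subA subB finite_strand_ends[OF finS] finite_strand_ends[OF finB]])
  have symAB: "sym (RA \<union> RB)" unfolding RA_def RB_def
    using strand_rel_sym[of S L] strand_rel_sym[of "V-S" L] invS invB by (simp add: sym_Un)
  have subX: "RA \<union> RB \<subseteq> X \<times> X" using subA subB XAB by auto
  have ptX: "pt s \<in> X" "qt s \<in> X" for s unfolding X_def strand_ends_def pt_def qt_def using pV hlV LpV by auto
  define Inv where "Inv = (\<lambda>s::slot. {(x::'v \<times> hl \<times> slot, y::'v \<times> hl \<times> slot). snd (snd x) = snd (snd y) \<and> (snd (snd x) = s \<longrightarrow> (fst x \<in> S \<longleftrightarrow> fst y \<in> S))})"
  have Inv_refl: "\<forall>z. (z,z) \<in> Inv s" for s unfolding Inv_def by auto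
  have Inv_trans: "trans (Inv s)" for s unfolding Inv_def trans_def by auto
  have RAI: "RA \<subseteq> Inv s" "RB \<subseteq> Inv s" for s unfolding Inv_def RA_def RB_def strand_rel_def by auto
  have eI: "t \<noteq> s \<Longrightarrow> e t \<subseteq> Inv s" for s t unfolding Inv_def e_def pt_def qt_def by auto
  have ptI: "(pt s, qt s) \<notin> Inv s" for s unfolding Inv_def pt_def qt_def using pS LpS hlV by auto
  have n1: "(pt SI, qt SI) \<notin> (RA \<union> RB)\<^sup>*"
    using rtrancl_inv[of "pt SI" "qt SI" "RA \<union> RB" "Inv SI"] RAI Inv_refl Inv_trans ptI by auto
  have n2: "(pt SJ, qt SJ) \<notin> (RA \<union> RB \<union> e SI)\<^sup>*"
    using rtrancl_inv[of "pt SJ" "qt SJ" "RA \<union> RB \<union> e SI" "Inv SJ"] RAI eI[of SI SJ] Inv_refl Inv_trans ptI by auto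
  have n3: "(pt SK, qt SK) \<notin> (RA \<union> RB \<union> e SI \<union> e SJ)\<^sup>*"
    using rtrancl_inv[of "pt SK" "qt SK" "RA \<union> RB \<union> e SI \<union> e SJ" "Inv SK"] RAI eI[of SI SK] eI[of SJ SK] Inv_refl Inv_trans ptI by auto
  have c1: "card (X // (RA \<union> RB \<union> e SI)\<^sup>*) + 1 = card (X // (RA \<union> RB)\<^sup>*)"
    unfolding e_eq[of SI] by (rule quot_add_edge[OF finX symAB subX ptX n1])
  have sym1: "sym (RA \<union> RB \<union> e SI)" unfolding e_eq[of SI] by (rule sym_add[OF symAB])
  have sub1: "RA \<union> RB \<union> e SI \<subseteq> X \<times> X" using subX ptX unfolding e_def by auto
  have c2: "card (X // (RA \<union> RB \<union> e SI \<union> e SJ)\<^sup>*) + 1 = card (X // (RA \<union> RB \<union> e SI)\<^sup>*)"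
    unfolding e_eq[of SJ] by (rule quot_add_edge[OF finX sym1 sub1 ptX n2])
  have sym2: "sym (RA \<union> RB \<union> e SI \<union> e SJ)" unfolding e_eq[of SJ] by (rule sym_add[OF sym1])
  have sub2: "RA \<union> RB \<union> e SI \<union> e SJ \<subseteq> X \<times> X" using sub1 ptX unfolding e_def by auto
  have c3: "card (X // R3\<^sup>*) + 1 = card (X // (RA \<union> RB \<union> e SI \<union> e SJ)\<^sup>*)"
    unfolding R3_def e_eq[of SK] by (rule quot_add_edge[OF finX sym2 sub2 ptX n3])
  have cnt: "card (faces V L) + 3 = card (faces S L2) + card (faces (V-S) L1)"
    using c0 c1 c2 c3 unfolding X_def FV by linarith
  have cV: "card V = card S + card (V - S)" using finV SV by (metis card_Diff_subset finS card_mono le_add_diff_inverse)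
  have "real (card (faces V L)) + 3 = real (card (faces S L2)) + real (card (faces (V-S) L1))"
    using cnt by (metis of_nat_add of_nat_numeral)
  moreover have "real (card V) = real (card S) + real (card (V-S))" using cV by simp
  ultimately show ?thesis unfolding L1_def[symmetric] L2_def[symmetric]
    using degree_formula[OF finV, of L] degree_formula[OF finS, of L2] degree_formula[OF finB, of L1]
    by (simp add: field_simps)
qed


end
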